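(* Assume the setup in the context and let $\preceq$ be the total order on $X$ given by: $u^*_{t,s}\prec u_{j,i}$ for all indices, $u_{t,s}\prec u_{j,i}$ iff $(t,s)<(j,i)$ lexicographically, and $u^*_{t,s}\prec u^*_{j,i}$ iff $(t,s)<(j,i)$ lexicographically, extended degree-lexicographically to monomials. Then $R$ is not a Gröbner basis of $I$ with respect to $\preceq$ (i.e. the tips of elements of $R$ do not generate the monoid ideal of tips of nonzero elements of $I$). In particular $R$ is not a universal Gröbner basis of $I$.
   Context: Let $k$ be a field and $n\ge 2$ an integer; write $[n]=\{1,\dots,n\}$ and $r(i)=n+1-i$. Let $X=\{u_{j,i},u^*_{j,i}:(j,i)\in[n]^2\}$ be a set of $2n^2$ distinct symbols and let $*$ be the involution of $X$ exchanging $u_{j,i}$ and $u^*_{j,i}$. Let $k\langle X\rangle$ be the free unital $k$-algebra on $X$. For an $n\times n$ matrix $v=(v_{j,i})$ with entries in $X$ define $v^t_{j,i}=v_{i,j}$, $v^\star_{j,i}=(v_{r(j),r(i)})^*$, $v^\dagger_{j,i}=(v_{r(i),r(j)})^*$. Let $u=(u_{j,i})$ and $M=\{u,u^t,u^\star,u^\dagger\}$. Let $I$ be the two-sided ideal generated by $R=\{\sum_{s=1}^n v_{j,r(s)}v^\dagger_{s,r(i)}-\delta_{j,i}1: v\in M,(j,i)\in[n]^2\}$ (these are exactly the relations $uu^{*T}=1$-type unitarity relations: $\sum_s u_{j,s}u^*_{i,s}=\delta_{j,i}$, $\sum_s u_{s,j}u^*_{s,i}=\delta_{j,i}$, $\sum_s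 u^*_{s,j}u_{s,i}=\delta_{j,i}$, $\sum_s u^*_{j,s}u_{i,s}=\delta_{j,i}$). A Gröbner basis of $I$ with respect to a monomial order is a subset $G\subseteq I$ such that the leading monomials of elements of $G$ generate, as a two-sided monoid ideal of the free monoid on $X$, the set of leading monomials of all nonzero elements of $I$. *)

theory Defs
  imports Main
begin

text \<open>The generators X: U j i stands for u_{j,i}, Us j i for u^*_{j,i} (indices in [n]).\<close>
datatype gen = U nat nat | Us nat nat

fun gstar :: "gen \<Rightarrow> gen" where
  "gstar (U j i) = Us j i"
| "gstar (Us j i) = U j i"

text \<open>Elements of the free unital algebra k<X>: finitely supported functions
  from words (the free monoid on X) to k.  Multiplication is concatenation-convolution.\<close>
type_synonym 'k fpoly = "gen list \<Rightarrow> 'k"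

definition fin_supp :: "'k::zero fpoly \<Rightarrow> bool" where
  "fin_supp p \<longleftrightarrow> finite {w. p w \<noteq> 0}"

definition mono :: "gen list \<Rightarrow> 'k::{zero,one} fpoly" where
  "mono v = (\<lambda>w. if w = v then 1 else 0)"

definition pzero :: "'k::zero fpoly" where
  "pzero = (\<lambda>w. 0)"

definition padd :: "'k::plus fpoly \<Rightarrow> 'k fpoly \<Rightarrow> 'k fpoly" where
  "padd p q = (\<lambda>w. p w + q w)"

definition pmult :: "'k::comm_semiring_0 fpoly \<Rightarrow> 'k fpoly \<Rightarrow> 'k fpoly" where
  "pmult p q = (\<lambda>w. \<Sum>i\<le>length w. p (take i w) * q (drop i w))"

inductive_set ideal_gen :: "'k::field fpoly set \<Rightarrow> 'k fpoly set" for S where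
  gen: "r \<in> S \<Longrightarrow> r \<in> ideal_gen S"
| zero: "pzero \<in> ideal_gen S"
| add: "p \<in> ideal_gen S \<Longrightarrow> q \<in> ideal_gen S \<Longrightarrow> padd p q \<in> ideal_gen S"
| lmult: "p \<in> ideal_gen S \<Longrightarrow> fin_supp a \<Longrightarrow> pmult a p \<in> ideal_gen S"
| rmult: "p \<in> ideal_gen S \<Longrightarrow> fin_supp a \<Longrightarrow> pmult p a \<in> ideal_gen S"

definition rr :: "nat \<Rightarrow> nat \<Rightarrow> nat" where
  "rr n i = n + 1 - i"

definition mat_u :: "nat \<Rightarrow> nat \<Rightarrow> gen" where
  "mat_u j i = U j i"

definition mat_t :: "(nat \<Rightarrow> nat \<Rightarrow> gen) \<Rightarrow> nat \<Rightarrow> nat \<Rightarrow> gen" where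
  "mat_t v j i = v i j"

definition mat_star :: "nat \<Rightarrow> (nat \<Rightarrow> nat \<Rightarrow> gen) \<Rightarrow> nat \<Rightarrow> nat \<Rightarrow> gen" where
  "mat_star n v j i = gstar (v (rr n j) (rr n i))"

definition mat_dag :: "nat \<Rightarrow> (nat \<Rightarrow> nat \<Rightarrow> gen) \<Rightarrow> nat \<Rightarrow> nat \<Rightarrow> gen" where
  "mat_dag n v j i = gstar (v (rr n i) (rr n j))"

definition Mset :: "nat \<Rightarrow> (nat \<Rightarrow> nat \<Rightarrow> gen) set" where
  "Mset n = {mat_u, mat_t mat_u, mat_star n mat_u, mat_dag n mat_u}"

definition Rel :: "nat \<Rightarrow> 'k::field fpoly set" where
  "Rel n = {(\<lambda>w. (\<Sum>s\<in>{1..n}. mono [v j (rr n s), mat_dag n v s (rr n i)] w)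
               - (if j = i then mono [] w else 0))
           | v j i. v \<in> Mset n \<and> j \<in> {1..n} \<and> i \<in> {1..n}}"

fun gen_less :: "gen \<Rightarrow> gen \<Rightarrow> bool" where
  "gen_less (Us t s) (U j i) = True"
| "gen_less (U t s) (Us j i) = False"
| "gen_less (U t s) (U j i) = (t < j \<or> (t = j \<and> s < i))"
| "gen_less (Us t s) (Us j i) = (t < j \<or> (t = j \<and> s < i))"

definition word_less :: "gen list \<Rightarrow> gen list \<Rightarrow> bool" where
  "word_less v w \<longleftrightarrow> length v < length w \<or>
     (length v = length w \<and> (\<exists>p a b x y. v = p @ a # x \<and> w = p @ b # y \<and> gen_less a b))"

definition tip :: "'k::zero fpoly \<Rightarrow> gen list" where
  "tip p = (THE w. p w \<noteq> 0 \<and> (\<forall>v. p v \<noteq> 0 \<and> v \<noteq> w \<longrightarrow> word_less v w))"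

definition is_groebner_basis :: "'k::zero fpoly set \<Rightarrow> 'k fpoly set \<Rightarrow> bool" where
  "is_groebner_basis G I \<longleftrightarrow> G \<subseteq> I \<and>
     (\<forall>f\<in>I. f \<noteq> pzero \<longrightarrow>
        (\<exists>g\<in>G. g \<noteq> pzero \<and> (\<exists>a b. tip f = a @ tip g @ b)))"

end

theory Submission imports Defs begin

lemma gen_less_irrefl: "\<not> gen_less a a" by (cases a) auto
lemma gen_less_asym: "gen_less a b \<Longrightarrow> \<not> gen_less b a" by (cases a; cases b) auto

lemma word_less_irrefl: "\<not> word_less v v"
proof
  assume "word_less v v"
  then obtain p a b x y where "v = p @ a # x" "v = p @ b # y" "gen_less a b"
    unfolding word_less_def by auto
  then have "a = b" by simp
  then show False using \<open>gen_less a b\<close> gen_less_irrefl by simp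
qed

lemma word_less_asym: assumes "word_less v w" shows "\<not> word_less w v"
proof
  assume h: "word_less w v"
  show False
  proof (cases "length v = length w")
    case False then show ?thesis using assms h unfolding word_less_def by auto
  next
    case True
    from assms True obtain p a b x y where A: "v = p @ a # x" "w = p @ b # y" "gen_less a b"
      unfolding word_less_def by auto
    from h True obtain p' a' b' x' y' where B: "w = p' @ a' # x'" "v = p' @ b' # y'" "gen_less a' b'"
      unfolding word_less_def by auto
    consider "length p < length p'" | "length p' < length p" | "length p = length p'" by linarith
    then show False
    proof cases
      case 1
      have "v ! length p = a" "w ! length p = b" using \<open>v = p @ a # x\<close> \<open>w = p @ b # y\<close> by auto
      moreover have "v ! length p = p' ! length p" using B(2) 1 by (simp add: nth_append)
      moreover have "w ! length p = p' ! length p" using B(1) 1 by (simp add: nth_append)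
      ultimately show False using \<open>gen_less a b\<close> gen_less_irrefl by metis
    next
      case 2
      have "v ! length p' = b'" "w ! length p' = a'" using B by auto
      have "v ! length p' = p ! length p'" using A(1) 2 by (simp add: nth_append)
      moreover have "w ! length p' = p ! length p'" using A(2) 2 by (simp add: nth_append)
      ultimately
      show False using \<open>v ! length p' = b'\<close> \<open>w ! length p' = a'\<close> \<open>gen_less a' b'\<close> gen_less_irrefl
        by metis
    next
      case 3
      have "p = take (length p) v" using A by simp
      moreover have "p' = take (length p') v" using B by simp
      ultimately have "p = p'" using 3 by simp
      then have "a = b'" "b = a'" using A B by auto
      then show False using A B gen_less_asym by blast
    qed
  qed
qed

lemma tip_eq:
  assumes "g m \<noteq> 0" "\<And>v. g v \<noteq> 0 \<Longrightarrow> v \<noteq> m \<Longrightarrow> word_less v m"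
  shows "tip g = m"
  unfolding tip_def
proof (rule the_equality)
  show "g m \<noteq> 0 \<and> (\<forall>v. g v \<noteq> 0 \<and> v \<noteq> m \<longrightarrow> word_less v m)" using assms by auto
next
  fix w assume w: "g w \<noteq> 0 \<and> (\<forall>v. g v \<noteq> 0 \<and> v \<noteq> w \<longrightarrow> word_less v w)"
  show "w = m"
  proof (rule ccontr)
    assume "w \<noteq> m"
    then have "word_less w m" "word_less m w" using w assms by auto
    then show False using word_less_asym by blast
  qed
qed

lemma sum_mono_eval:
  assumes "finite S" "k \<in> S" "\<And>s. s \<in> S \<Longrightarrow> W s = m \<longleftrightarrow> s = k"
  shows "(\<Sum>s\<in>S. mono (W s) m) = (1::'k::field)"
proof -
  have "(\<Sum>s\<in>S. mono (W s) m) = (\<Sum>s\<in>S. if s = k then (1::'k) else 0)"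
  proof (rule sum.cong)
    fix s assume "s \<in> S"
    then show "mono (W s) m = (if s = k then (1::'k) else 0)"
      using assms(3)[of s] by (auto simp: mono_def)
  qed simp
  then show ?thesis using assms by simp
qed

lemma sum_mono_zero:
  assumes "\<And>s. s \<in> S \<Longrightarrow> W s \<noteq> m"
  shows "(\<Sum>s\<in>S. mono (W s) m) = (0::'k::field)"
proof (rule sum.neutral, rule ballI)
  fix s assume "s \<in> S"
  then show "mono (W s) m = (0::'k)" using assms[of s] by (auto simp: mono_def)
qed

lemma pmult_monoL:
  "pmult (mono [x]) p w = (if w \<noteq> [] \<and> hd w = x then p (tl w) else (0::'k::field))"
proof -
  have "pmult (mono [x]) p w = (\<Sum>i\<le>length w. if i = 1 then (if w \<noteq> [] \<and> hd w = x then p (tl w) else 0) else 0)"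
    unfolding pmult_def
  proof (rule sum.cong)
    fix i assume "i \<in> {..length w}"
    then show "mono [x] (take i w) * p (drop i w) = (if i = 1 then (if w \<noteq> [] \<and> hd w = x then p (tl w) else 0) else 0)"
      apply (cases w; cases i)
      apply (auto simp: mono_def drop_Suc)
      done
  qed simp
  also have "\<dots> = (if w \<noteq> [] \<and> hd w = x then p (tl w) else 0)"
    by (cases w) (auto simp: Suc_le_eq)
  finally show ?thesis .
qed

definition cmono :: "'k::zero \<Rightarrow> gen \<Rightarrow> 'k fpoly" where
  "cmono c x = (\<lambda>w. if w = [x] then c else 0)"

lemma fin_supp_cmono: "fin_supp (cmono c x)"
  unfolding fin_supp_def cmono_def
  by (rule finite_subset[of _ "{[x]}"]) auto

lemma fin_supp_mono: "fin_supp (mono [x] :: 'k::field fpoly)"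
  unfolding fin_supp_def mono_def
  by (rule finite_subset[of _ "{[x]}"]) auto

lemma drop_eq_single: "i \<le> length w \<Longrightarrow> drop i w = [x] \<longleftrightarrow> (w \<noteq> [] \<and> i = length w - 1 \<and> last w = x)"
proof
  assume h: "i \<le> length w" "drop i w = [x]"
  then have "length (drop i w) = 1" by simp
  then have "w \<noteq> []" "i = length w - 1" by auto
  moreover have "last (drop i w) = last w" using \<open>w \<noteq> []\<close> \<open>i = length w - 1\<close>
    by (intro last_drop) simp
  moreover have "last (drop i w) = x" using h by simp
  ultimately show "w \<noteq> [] \<and> i = length w - 1 \<and> last w = x" by simp
next
  assume "w \<noteq> [] \<and> i = length w - 1 \<and> last w = x"
  then show "drop i w = [x]"
    by (metis append_butlast_last_id append_eq_conv_conj length_butlast)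
qed

lemma pmult_monoR:
  "pmult p (cmono c x) w = (if w \<noteq> [] \<and> last w = x then p (butlast w) * c else (0::'k::field))"
proof -
  have "pmult p (cmono c x) w = (\<Sum>i\<le>length w. if i = length w - 1 then (if w \<noteq> [] \<and> last w = x then p (butlast w) * c else 0) else 0)"
    unfolding pmult_def
  proof (rule sum.cong)
    fix i assume "i \<in> {..length w}"
    then show "p (take i w) * cmono c x (drop i w) = (if i = length w - 1 then (if w \<noteq> [] \<and> last w = x then p (butlast w) * c else 0) else 0)"
      using drop_eq_single[of i w x] by (auto simp: cmono_def butlast_conv_take)
  qed simp
  also have "\<dots> = (if w \<noteq> [] \<and> last w = x then p (butlast w) * c else 0)"
    by auto
  finally show ?thesis .
qed

lemma word_less_len: "length v < length w \<Longrightarrow> word_less v w"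
  unfolding word_less_def by simp

lemma word_less_first: "gen_less a b \<Longrightarrow> length x = length y \<Longrightarrow> word_less (a # x) (b # y)"
  unfolding word_less_def by (rule disjI2) (auto intro!: exI[of _ "[]"])

lemma word_less_second: "gen_less a b \<Longrightarrow> length x = length y \<Longrightarrow> word_less (c # a # x) (c # b # y)"
  unfolding word_less_def by (rule disjI2) (auto intro!: exI[of _ "[c]"])

lemma tip_sum:
  assumes "finite S" "k \<in> S" "\<And>s. s \<in> S \<Longrightarrow> length (W s) = 2"
    "\<And>s. s \<in> S \<Longrightarrow> s \<noteq> k \<Longrightarrow> word_less (W s) (W k)"
  shows "tip (\<lambda>w. (\<Sum>s\<in>S. mono (W s) w) - (if b then mono [] w else (0::'k::field))) = W k"
proof (rule tip_eq)
  have neq: "W s = W k \<longleftrightarrow> s = k" if "s \<in> S" for s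
    using assms(4)[OF that] word_less_irrefl by metis
  have "(\<Sum>s\<in>S. mono (W s) (W k)) = (1::'k)"
    by (rule sum_mono_eval) (use assms neq in auto)
  moreover have "mono [] (W k) = (0::'k)" using assms(3)[OF assms(2)] by (auto simp: mono_def)
  ultimately show "(\<Sum>s\<in>S. mono (W s) (W k)) - (if b then mono [] (W k) else (0::'k)) \<noteq> 0" by simp
next
  fix v assume v: "(\<Sum>s\<in>S. mono (W s) v) - (if b then mono [] v else (0::'k)) \<noteq> 0" "v \<noteq> W k"
  show "word_less v (W k)"
  proof (cases "v = []")
    case True then show ?thesis using assms(3)[OF assms(2)] by (simp add: word_less_len)
  next
    case False
    then have "(if b then mono [] v else 0) = (0::'k)" by (simp add: mono_def)
    then have "(\<Sum>s\<in>S. mono (W s) v) \<noteq> (0::'k)" using v by simp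
    then obtain s where "s \<in> S" "W s = v" using sum_mono_zero[of S W v] by blast
    then show ?thesis using v assms(4) by blast
  qed
qed

lemma tip_rel:
  assumes "g \<in> (Rel n :: 'k::field fpoly set)" "n \<ge> 1"
  shows "\<exists>j i. tip g = [U j n, Us i n] \<or> tip g = [U n j, Us n i] \<or> tip g = [Us j n, U i n] \<or> tip g = [Us n j, U n i]"
proof -
  obtain v j i where g: "g = (\<lambda>w. (\<Sum>s\<in>{1..n}. mono [v j (rr n s), mat_dag n v s (rr n i)] w)
               - (if j = i then mono [] w else 0))" and v: "v \<in> Mset n" and ji: "j \<in> {1..n}" "i \<in> {1..n}"
    using assms(1) unfolding Rel_def by blast
  let ?W = "\<lambda>s. [v j (rr n s), mat_dag n v s (rr n i)]"
  have len: "\<And>s. s \<in> {1..n} \<Longrightarrow> length (?W s) = 2" by simp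
  from v consider "v = mat_u" | "v = mat_t mat_u" | "v = mat_star n mat_u" | "v = mat_dag n mat_u"
    unfolding Mset_def by blast
  then show ?thesis
  proof cases
    case 1
    have "tip g = ?W 1" unfolding g
      by (rule tip_sum) (use assms ji 1 in \<open>auto simp: mat_dag_def mat_u_def rr_def intro!: word_less_first\<close>)
    then show ?thesis using 1 ji by (auto simp: mat_dag_def mat_u_def rr_def)
  next
    case 2
    have "tip g = ?W 1" unfolding g
      by (rule tip_sum) (use assms ji 2 in \<open>auto simp: mat_dag_def mat_t_def mat_u_def rr_def intro!: word_less_first\<close>)
    then show ?thesis using 2 ji by (auto simp: mat_dag_def mat_t_def mat_u_def rr_def)
  next
    case 3
    have "tip g = ?W n" unfolding g
      by (rule tip_sum) (use assms ji 3 in \<open>auto simp: mat_dag_def mat_star_def mat_u_def rr_def intro!: word_less_first\<close>)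
    then show ?thesis using 3 ji by (auto simp: mat_dag_def mat_star_def mat_u_def rr_def)
  next
    case 4
    have "tip g = ?W n" unfolding g
      by (rule tip_sum) (use assms ji 4 in \<open>auto simp: mat_dag_def mat_u_def rr_def intro!: word_less_first\<close>)
    then show ?thesis using 4 ji by (auto simp: mat_dag_def mat_u_def rr_def)
  qed
qed

lemma factor3:
  assumes "[x1, x2, x3] = a @ [y1, y2] @ b"
  shows "(y1 = x1 \<and> y2 = x2) \<or> (y1 = x2 \<and> y2 = x3)"
proof (cases a)
  case Nil then show ?thesis using assms by simp
next
  case (Cons c a')
  then show ?thesis using assms
  proof (cases a')
    case Nil then show ?thesis using assms Cons by simp
  next
    case (Cons d a'')
    have "length [x1, x2, x3] = length (a @ [y1, y2] @ b)" using assms by (rule arg_cong)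
    then show ?thesis using \<open>a = c # a'\<close> Cons by simp
  qed
qed

theorem mainTheorem15:
  fixes n :: nat
  assumes "n \<ge> 2"
  shows "\<not> is_groebner_basis (Rel n :: 'k::field fpoly set) (ideal_gen (Rel n))"
proof
  assume gb: "is_groebner_basis (Rel n :: 'k::field fpoly set) (ideal_gen (Rel n))"
  define D :: "'k fpoly" where "D = (\<lambda>w. (\<Sum>s\<in>{1..n}. mono [mat_star n mat_u n (rr n s), mat_dag n (mat_star n mat_u) s (rr n n)] w)
               - (if n = n then mono [] w else 0))"
  define A :: "'k fpoly" where "A = (\<lambda>w. (\<Sum>s\<in>{1..n}. mono [mat_u 1 (rr n s), mat_dag n mat_u s (rr n 1)] w)
               - (if (1::nat) = 1 then mono [] w else 0))"
  have D_in: "D \<in> Rel n" unfolding Rel_def Mset_def D_def using assms by force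
  have A_in: "A \<in> Rel n" unfolding Rel_def Mset_def A_def using assms by force
  have D_eq: "D w = (\<Sum>s\<in>{1..n}. mono [Us 1 s, U 1 s] w) - mono [] w" for w
    unfolding D_def by (simp, rule sum.cong) (auto simp: mat_star_def mat_dag_def mat_u_def rr_def)
  have A_eq: "A w = (\<Sum>s\<in>{1..n}. mono [U 1 (rr n s), Us 1 (rr n s)] w) - mono [] w" for w
    unfolding A_def by (simp, rule sum.cong) (auto simp: mat_dag_def mat_u_def rr_def)
  define f where "f = padd (pmult (mono [U 1 n]) D) (pmult A (cmono (-1) (U 1 n)))"
  have f_in: "f \<in> ideal_gen (Rel n)" unfolding f_def
    by (intro ideal_gen.add ideal_gen.lmult ideal_gen.rmult ideal_gen.gen D_in A_in fin_supp_mono fin_supp_cmono)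
  have f_eq: "f w = (if w \<noteq> [] \<and> hd w = U 1 n then D (tl w) else 0) +
       (if w \<noteq> [] \<and> last w = U 1 n then A (butlast w) * -1 else 0)" for w
    unfolding f_def padd_def pmult_monoL pmult_monoR by simp
  define t where "t = [U 1 n, Us 1 (n-1), U 1 (n-1)]"
  have D_val: "D [Us 1 m, U 1 m] = 1" if "m \<in> {1..n}" for m
  proof -
    have "(\<Sum>s\<in>{1..n}. mono [Us 1 s, U 1 s] [Us 1 m, U 1 m]) = (1::'k)"
      by (rule sum_mono_eval[where k = m]) (use that in auto)
    then show ?thesis by (simp add: D_eq mono_def)
  qed
  have A_val: "A [U 1 n, Us 1 n] = 1"
  proof -
    have "(\<Sum>s\<in>{1..n}. mono [U 1 (rr n s), Us 1 (rr n s)] [U 1 n, Us 1 n]) = (1::'k)"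
      by (rule sum_mono_eval[where k = 1]) (use assms in \<open>auto simp: rr_def\<close>)
    then show ?thesis by (simp add: A_eq mono_def)
  qed
  have nn: "n - 1 \<noteq> n" "n - 1 \<in> {1..n}" using assms by auto
  have ft: "f t = 1" using nn D_val[of "n-1"] by (simp add: f_eq t_def)
  have f0: "f [U 1 n, Us 1 n, U 1 n] = 0" using assms D_val[of n] A_val by (simp add: f_eq)
  have D_supp: "w = [] \<or> (\<exists>s\<in>{1..n}. w = [Us 1 s, U 1 s])" if "D w \<noteq> 0" for w
  proof (rule ccontr)
    assume h: "\<not> ?thesis"
    then have "(\<Sum>s\<in>{1..n}. mono [Us 1 s, U 1 s] w) = (0::'k)" by (intro sum_mono_zero) auto
    moreover have "mono [] w = (0::'k)" using h by (simp add: mono_def)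
    ultimately show False using that by (simp add: D_eq)
  qed
  have A_supp: "w = [] \<or> (\<exists>s\<in>{1..n}. w = [U 1 s, Us 1 s])" if "A w \<noteq> 0" for w
  proof (rule ccontr)
    assume h: "\<not> ?thesis"
    have "rr n s \<in> {1..n}" if "s \<in> {1..n}" for s using that by (auto simp: rr_def)
    then have "(\<Sum>s\<in>{1..n}. mono [U 1 (rr n s), Us 1 (rr n s)] w) = (0::'k)"
      using h by (intro sum_mono_zero) auto
    moreover have "mono [] w = (0::'k)" using h by (simp add: mono_def)
    ultimately show False using that by (simp add: A_eq)
  qed
  have tip_f: "tip f = t"
  proof (rule tip_eq)
    show "f t \<noteq> 0" using ft by simp
  next
    fix v assume v: "f v \<noteq> 0" "v \<noteq> t"
    then consider "v \<noteq> []" "hd v = U 1 n" "D (tl v) \<noteq> 0" | "v \<noteq> []" "last v = U 1 n" "A (butlast v) \<noteq> 0"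
      by (cases "D (tl v) = 0") (auto simp: f_eq split: if_splits)
    then show "word_less v t"
    proof cases
      case 1
      from D_supp[OF 1(3)] show ?thesis
      proof
        assume "tl v = []" then have "length v = 1" using 1 by (cases v) auto
        then show ?thesis by (intro word_less_len) (simp add: t_def)
      next
        assume "\<exists>s\<in>{1..n}. tl v = [Us 1 s, U 1 s]"
        then obtain s where s: "s \<in> {1..n}" "v = [U 1 n, Us 1 s, U 1 s]" using 1 by (cases v) auto
        have "s \<le> n" using s by simp
        then consider "s = n" | "s = n - 1" | "s < n - 1" by linarith
        then show ?thesis
        proof cases
          case 1 then show ?thesis using f0 v s by simp
        next
          case 2 then show ?thesis using v s by (simp add: t_def)
        next
          case 3 then show ?thesis unfolding s(2) t_def by (intro word_less_second) auto
        qed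
      qed
    next
      case 2
      from A_supp[OF 2(3)] show ?thesis
      proof
        assume "butlast v = []" then have "length v = 1" using 2 by (cases v rule: rev_cases) auto
        then show ?thesis by (intro word_less_len) (simp add: t_def)
      next
        assume "\<exists>s\<in>{1..n}. butlast v = [U 1 s, Us 1 s]"
        then obtain s where s: "s \<in> {1..n}" "v = [U 1 s, Us 1 s, U 1 n]"
          using 2 by (cases v rule: rev_cases) auto
        have "s \<le> n" using s by simp
        then consider "s = n" | "s < n" by linarith
        then show ?thesis
        proof cases
          case 1 then show ?thesis using f0 v s by simp
        next
          case 2 then show ?thesis unfolding s(2) t_def by (intro word_less_first) auto
        qed
      qed
    qed
  qed
  have fnz: "f \<noteq> pzero"
  proof
    assume "f = pzero"
    then have "f t = 0" by (simp add: pzero_def)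
    with ft show False by simp
  qed
  note gbc = bspec[OF conjunct2[OF gb[unfolded is_groebner_basis_def]] f_in]
  from mp[OF gbc fnz] obtain g :: "'k fpoly" and a b where g1: "g \<in> Rel n" and g2': "tip f = a @ tip g @ b" by blast
  have g: "g \<in> Rel n" "t = a @ tip g @ b" using g1 g2' tip_f by simp_all
  have n1: "n \<ge> 1" using assms by simp
  from tip_rel[OF g(1) n1] obtain j i where forms: "tip g = [U j n, Us i n] \<or> tip g = [U n j, Us n i] \<or> tip g = [Us j n, U i n] \<or> tip g = [Us n j, U n i]"
    by blast
  then obtain x y where xy: "tip g = [x, y]" by blast
  have c: "(x = U 1 n \<and> y = Us 1 (n-1)) \<or> (x = Us 1 (n-1) \<and> y = U 1 (n-1))"
    using factor3[of "U 1 n" "Us 1 (n-1)" "U 1 (n-1)" a x y b] g(2) xy unfolding t_def by simp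
  have n1': "1 \<noteq> n" using assms by simp
  from forms show False
  proof (elim disjE)
    assume "tip g = [U j n, Us i n]" then show False using c xy nn(1) by simp
  next
    assume "tip g = [U n j, Us n i]" then show False using c xy n1' by simp
  next
    assume "tip g = [Us j n, U i n]" then show False using c xy nn(1) by simp
  next
    assume "tip g = [Us n j, U n i]" then show False using c xy n1' by simp
  qed
qed

end
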